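(* Let $w\in\Sigma^*$ and suppose the bigram graph $G(w)$ has a removable node $r\in\Sigma$. Let $w'=P_r(w)$ be the string obtained from $w$ by deleting all occurrences of the letter $r$. Then $w\in L_{\mathrm{OBST}}$ if and only if $w'\in L_{\mathrm{OBST}}$.
   Context: Let $\Sigma$ be a finite alphabet and $\$\notin\Sigma$; $\Sigma_\$=\Sigma\cup\{\$\}$. The bigram graph $G(w)$ of $w\in\Sigma^*$ is the weighted directed graph on vertex set $\Sigma_\$$ in which the weight $e(u,v)\ge0$ of the edge $(u,v)$ is the number of times $u$ occurs immediately before $v$ in the string $\$w\$$. For $v$ a vertex, $\mathrm{outflow}(v)=\sum_{u\neq v}e(v,u)$. If $e(u,v)>0$ we say $u$ is a parent of $v$ and $v$ is a child of $u$. A vertex $x\neq\$$ is removable in $G(w)$ if: (a) $x$ has exactly one child $b$ other than $x$ itself; (b) no parent of $x$ other than $x$ itself has $b$ as a child; and (c) if $e(x,x)>0$ then $\mathrm{outflow}(x)=1$. For $x\in\Sigma$ write $\Sigma_{\neg x}=\Sigma\setminus\{x\}$. For $x\in\Sigma$ and $a,b\in\Sigma_{\neg x}$ (with $a=b$ allowed) define $I_{x,a,b}=\Sigma^*\,a\,x\,\Sigma_{\neg a}^*\,b\,\Sigma^*$, $J_{x,a,b}=\Sigma^*\,a\,\Sigma_{\neg x}^*\,b\,\Sigma^*$ (regular-expression notation), $K_{x,a,b}=I_{x,a,b}\cap J_{x,a,b}$, and $L_{\mathrm{OBST}}=\bigcup_{x\in\Sigma}\bigcup_{a,b\in\Sigma_{\neg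 x}}K_{x,a,b}$. *)

theory Defs
  imports Main
begin

(* The end marker $ is represented by None; a letter c of Sig by Some c. *)
definition ext_word :: "'a list \<Rightarrow> 'a option list" where
  "ext_word w = None # map Some w @ [None]"

definition bigram_e :: "'a list \<Rightarrow> 'a option \<Rightarrow> 'a option \<Rightarrow> nat" where
  "bigram_e w u v = card {i. Suc i < length (ext_word w) \<and> ext_word w ! i = u \<and> ext_word w ! Suc i = v}"

definition vertices :: "'a set \<Rightarrow> 'a option set" where
  "vertices Sig = insert None (Some ` Sig)"

definition outflow :: "'a set \<Rightarrow> 'a list \<Rightarrow> 'a option \<Rightarrow> nat" where
  "outflow Sig w v = (\<Sum>u\<in>vertices Sig - {v}. bigram_e w v u)"

definition removable :: "'a set \<Rightarrow> 'a list \<Rightarrow> 'a \<Rightarrow> bool" where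
  "removable Sig w x \<longleftrightarrow>
     x \<in> Sig \<and>
     (\<exists>b\<in>vertices Sig. b \<noteq> Some x \<and> bigram_e w (Some x) b > 0 \<and>
        (\<forall>c\<in>vertices Sig. c \<noteq> Some x \<and> bigram_e w (Some x) c > 0 \<longrightarrow> c = b) \<and>
        (\<forall>p\<in>vertices Sig. p \<noteq> Some x \<and> bigram_e w p (Some x) > 0 \<longrightarrow> bigram_e w p b = 0)) \<and>
     (bigram_e w (Some x) (Some x) > 0 \<longrightarrow> outflow Sig w (Some x) = 1)"

definition I_lang :: "'a set \<Rightarrow> 'a \<Rightarrow> 'a \<Rightarrow> 'a \<Rightarrow> 'a list set" where
  "I_lang Sig x a b = {w. \<exists>u v z. u \<in> lists Sig \<and> v \<in> lists (Sig - {a}) \<and> z \<in> lists Sig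
       \<and> w = u @ [a, x] @ v @ [b] @ z}"

definition J_lang :: "'a set \<Rightarrow> 'a \<Rightarrow> 'a \<Rightarrow> 'a \<Rightarrow> 'a list set" where
  "J_lang Sig x a b = {w. \<exists>u v z. u \<in> lists Sig \<and> v \<in> lists (Sig - {x}) \<and> z \<in> lists Sig
       \<and> w = u @ [a] @ v @ [b] @ z}"

definition K_lang :: "'a set \<Rightarrow> 'a \<Rightarrow> 'a \<Rightarrow> 'a \<Rightarrow> 'a list set" where
  "K_lang Sig x a b = I_lang Sig x a b \<inter> J_lang Sig x a b"

definition L_OBST :: "'a set \<Rightarrow> 'a list set" where
  "L_OBST Sig = (\<Union>x\<in>Sig. \<Union>a\<in>Sig - {x}. \<Union>b\<in>Sig - {x}. K_lang Sig x a b)"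

definition proj_del :: "'a \<Rightarrow> 'a list \<Rightarrow> 'a list" where
  "proj_del r w = filter (\<lambda>c. c \<noteq> r) w"

end

theory Submission
  imports Defs
begin


lemma filter_eq_appendD:
  "filter P w = xs @ ys \<Longrightarrow> \<exists>W1 W2. w = W1 @ W2 \<and> filter P W1 = xs \<and> filter P W2 = ys"
proof (induction xs arbitrary: w)
  case Nil then show ?case by (intro exI[of _ "[]"] exI[of _ w]) auto
next
  case (Cons x xs)
  from filter_eq_ConsD[of P w x "xs @ ys"] Cons.prems obtain us vs where
    "w = us @ x # vs" "\<forall>u\<in>set us. \<not> P u" "P x" "xs @ ys = filter P vs" by auto
  moreover from Cons.IH[of vs] this obtain V1 V2 where "vs = V1 @ V2" "filter P V1 = xs" "filter P V2 = ys" by auto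
  ultimately show ?case by (intro exI[of _ "us @ x # V1"] exI[of _ V2]) auto
qed

lemma finite_bigram_set: "finite {i. Suc i < length (ext_word w) \<and> ext_word w ! i = u \<and> ext_word w ! Suc i = v}"
  by (rule finite_subset[of _ "{..<length (ext_word w)}"]) auto

lemma ext_word_split: "w = s @ [p,q] @ t \<Longrightarrow>
   ext_word w = (None # map Some s) @ [Some p, Some q] @ map Some t @ [None]"
  by (simp add: ext_word_def)

lemma adj_idx: assumes "w = s @ [p,q] @ t"
  shows "Suc (length s) \<in> {i. Suc i < length (ext_word w) \<and> ext_word w ! i = Some p \<and> ext_word w ! Suc i = Some q}"
proof -
  have e: "ext_word w = (None # map Some s) @ [Some p, Some q] @ map Some t @ [None]"
    using assms by (simp add: ext_word_def)
  show ?thesis unfolding e by (simp add: nth_append)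
qed

lemma adj: assumes "w = s @ [p,q] @ t" shows "bigram_e w (Some p) (Some q) > 0"
  unfolding bigram_e_def using adj_idx[OF assms] finite_bigram_set
  by (subst card_gt_0_iff) blast

lemma adj2: assumes "w = s1 @ [p,q] @ t1" "w = s2 @ [p,q] @ t2" "length s1 \<noteq> length s2"
  shows "bigram_e w (Some p) (Some q) \<ge> 2"
proof -
  let ?S = "{i. Suc i < length (ext_word w) \<and> ext_word w ! i = Some p \<and> ext_word w ! Suc i = Some q}"
  have "{Suc (length s1), Suc (length s2)} \<subseteq> ?S" using adj_idx[OF assms(1)] adj_idx[OF assms(2)] by auto
  then have "card {Suc (length s1), Suc (length s2)} \<le> card ?S"
    by (rule card_mono[OF finite_bigram_set])
  then show ?thesis using assms(3) unfolding bigram_e_def by simp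
qed

lemma adj_end: assumes "w = s @ [p]" shows "bigram_e w (Some p) None > 0"
proof -
  have e: "ext_word w = (None # map Some s) @ [Some p, None]"
    using assms by (simp add: ext_word_def)
  have "Suc (length s) \<in> {i. Suc i < length (ext_word w) \<and> ext_word w ! i = Some p \<and> ext_word w ! Suc i = None}"
    unfolding e by (simp add: nth_append)
  then show ?thesis unfolding bigram_e_def using finite_bigram_set
  by (subst card_gt_0_iff) blast
qed



definition Iw :: "'a list \<Rightarrow> 'a \<Rightarrow> 'a \<Rightarrow> 'a \<Rightarrow> bool" where
  "Iw w x a b \<longleftrightarrow> (\<exists>U v Z. w = U @ [a,x] @ v @ [b] @ Z \<and> a \<notin> set v)"
definition Jw :: "'a list \<Rightarrow> 'a \<Rightarrow> 'a \<Rightarrow> 'a \<Rightarrow> bool" where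
  "Jw w x a b \<longleftrightarrow> (\<exists>U v Z. w = U @ [a] @ v @ [b] @ Z \<and> x \<notin> set v)"

lemma Lchar: assumes "w \<in> lists Sig"
  shows "w \<in> L_OBST Sig \<longleftrightarrow> (\<exists>x a b. a \<noteq> x \<and> b \<noteq> x \<and> Iw w x a b \<and> Jw w x a b)"
proof
  assume "w \<in> L_OBST Sig"
  then obtain x a b where h: "a \<noteq> x" "b \<noteq> x" "w \<in> I_lang Sig x a b" "w \<in> J_lang Sig x a b"
    unfolding L_OBST_def K_lang_def by blast
  from h(3) have "Iw w x a b" unfolding I_lang_def Iw_def by blast
  moreover from h(4) have "Jw w x a b" unfolding J_lang_def Jw_def by blast
  ultimately show "\<exists>x a b. a \<noteq> x \<and> b \<noteq> x \<and> Iw w x a b \<and> Jw w x a b" using h by blast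
next
  assume "\<exists>x a b. a \<noteq> x \<and> b \<noteq> x \<and> Iw w x a b \<and> Jw w x a b"
  then obtain x a b U v Z U2 v2 Z2 where h: "a \<noteq> x" "b \<noteq> x"
    "w = U @ [a,x] @ v @ [b] @ Z" "a \<notin> set v" "w = U2 @ [a] @ v2 @ [b] @ Z2" "x \<notin> set v2"
    unfolding Iw_def Jw_def by blast
  have s: "set w \<subseteq> Sig" using assms by auto
  have s1: "set U \<subseteq> Sig" "set v \<subseteq> Sig - {a}" "set Z \<subseteq> Sig" "x \<in> Sig" "a \<in> Sig" "b \<in> Sig"
    using s h(3,4) by auto
  have s2: "set U2 \<subseteq> Sig" "set v2 \<subseteq> Sig - {x}" "set Z2 \<subseteq> Sig"
    using s h(5,6) by auto
  have "w \<in> I_lang Sig x a b" unfolding I_lang_def mem_Collect_eq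
    by (rule exI[of _ U], rule exI[of _ v], rule exI[of _ Z]) (simp add: s1 h(3) lists_eq_set)
  moreover have "w \<in> J_lang Sig x a b" unfolding J_lang_def mem_Collect_eq
    by (rule exI[of _ U2], rule exI[of _ v2], rule exI[of _ Z2]) (simp add: s2 h(5) lists_eq_set)
  ultimately have "w \<in> K_lang Sig x a b" unfolding K_lang_def by blast
  then show "w \<in> L_OBST Sig" unfolding L_OBST_def using h(1,2) s1(4,5,6) by blast
qed

lemma NJ: assumes "w = U @ [a] @ v @ [b] @ Z"
  shows "\<exists>U' v' Z'. w = U' @ [a] @ v' @ [b] @ Z' \<and> set v' \<subseteq> set v \<and> a \<notin> set v' \<and> b \<notin> set v'"
proof -
  obtain v1 Z1 where 1: "w = U @ [a] @ v1 @ [b] @ Z1" "set v1 \<subseteq> set v" "b \<notin> set v1"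
  proof (cases "b \<in> set v")
    case True
    then obtain p q where "v = p @ b # q" "b \<notin> set p" by (metis split_list_first)
    then show ?thesis using that[of p "q @ [b] @ Z"] assms by auto
  next
    case False then show ?thesis using that[of v Z] assms by auto
  qed
  show ?thesis
  proof (cases "a \<in> set v1")
    case True
    then obtain p q where "v1 = p @ a # q" "a \<notin> set q" by (metis split_list_last)
    then show ?thesis using 1 by (intro exI[of _ "U @ a # p"] exI[of _ q] exI[of _ Z1]) auto
  next
    case False then show ?thesis using 1 by blast
  qed
qed

lemma NI: assumes "w = U @ [a,x] @ v @ [b] @ Z"
  shows "\<exists>v' Z'. w = U @ [a,x] @ v' @ [b] @ Z' \<and> set v' \<subseteq> set v \<and> b \<notin> set v'"
proof (cases "b \<in> set v")
  case True
  then obtain p q where "v = p @ b # q" "b \<notin> set p" by (metis split_list_first)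
  then show ?thesis using assms by (intro exI[of _ p] exI[of _ "q @ [b] @ Z"]) auto
next
  case False then show ?thesis using assms by blast
qed

lemma rep_comm: "\<forall>y\<in>set t. y = r \<Longrightarrow> r # t = t @ [r]"
  by (induction t) auto


lemma tw: "\<forall>y\<in>set l. P y \<Longrightarrow> \<not> P a \<Longrightarrow> takeWhile P (l @ a # m) = l"
  by (induction l) auto
lemma dw: "\<forall>y\<in>set l. P y \<Longrightarrow> \<not> P a \<Longrightarrow> dropWhile P (l @ a # m) = a # m"
  by (induction l) auto
lemma last_a_eq: "ys = ys'" if "xs @ a # ys = xs' @ a # ys'" "a \<notin> set ys" "a \<notin> set ys'"
proof -
  have "takeWhile (\<lambda>c. c \<noteq> a) (rev ys @ a # rev xs) = rev ys" using that(2) by (intro tw) auto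
  moreover have "takeWhile (\<lambda>c. c \<noteq> a) (rev ys' @ a # rev xs') = rev ys'" using that(3) by (intro tw) auto
  moreover have "rev ys @ a # rev xs = rev ys' @ a # rev xs'" using arg_cong[OF that(1), of rev] by simp
  ultimately show ?thesis by simp
qed
lemma strip_r: assumes "A @ r # Z = B @ r # Z2" "\<forall>y\<in>set Z. y=r" "\<forall>y\<in>set Z2. y=r"
  "A \<noteq> []" "B \<noteq> []" "last A \<noteq> r" "last B \<noteq> r"
  shows "A = B"
proof -
  obtain A' y where A: "A = A' @ [y]" using assms(4) by (cases A rule: rev_cases) auto
  obtain B' y' where B: "B = B' @ [y']" using assms(5) by (cases B rule: rev_cases) auto
  have "dropWhile (\<lambda>c. c = r) ((rev Z @ [r]) @ y # rev A') = y # rev A'"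
    using assms(2,6) A by (intro dw) auto
  moreover have "dropWhile (\<lambda>c. c = r) ((rev Z2 @ [r]) @ y' # rev B') = y' # rev B'"
    using assms(3,7) B by (intro dw) auto
  moreover have "(rev Z @ [r]) @ y # rev A' = (rev Z2 @ [r]) @ y' # rev B'"
    using arg_cong[OF assms(1), of rev] A B by simp
  ultimately have "y # rev A' = y' # rev B'" by simp
  then show ?thesis using A B by simp
qed
lemma LiftJ: assumes "filter P w = u @ [a] @ v @ [b] @ z"
  shows "\<exists>U V Z. w = U @ [a] @ V @ [b] @ Z \<and> set V \<subseteq> set v \<union> {y. \<not> P y}"
proof -
  obtain W1 W2 where 1: "w = W1 @ W2" "filter P W2 = a # (v @ b # z)"
    using filter_eq_appendD[of P w u "a # (v @ b # z)"] assms by auto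
  obtain us vs where 2: "W2 = us @ a # vs" "filter P vs = v @ (b # z)"
    using filter_eq_ConsD[OF 1(2)] by metis
  obtain V V' where 3: "vs = V @ V'" "filter P V = v" "filter P V' = b # z"
    using filter_eq_appendD[OF 2(2)] by auto
  obtain us' Z where 4: "V' = us' @ b # Z" "\<forall>u\<in>set us'. \<not> P u"
    using filter_eq_ConsD[OF 3(3)] by auto
  have "set V \<subseteq> set v \<union> {y. \<not> P y}" using 3(2) by auto
  then show ?thesis using 1 2 3 4
    by (intro exI[of _ "W1 @ us"] exI[of _ "V @ us'"] exI[of _ Z]) auto
qed

lemma LiftI: assumes "filter P w = u @ [a,x] @ v @ [b] @ z"
  shows "\<exists>U R V Z. w = U @ [a] @ R @ [x] @ V @ [b] @ Z \<and> (\<forall>y\<in>set R. \<not> P y) \<and> set V \<subseteq> set v \<union> {y. \<not> P y}"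
proof -
  obtain W1 W2 where 1: "w = W1 @ W2" "filter P W2 = a # (x # v @ b # z)"
    using filter_eq_appendD[of P w u "a # (x # v @ b # z)"] assms by auto
  obtain us vs where 2: "W2 = us @ a # vs" "filter P vs = x # (v @ b # z)"
    using filter_eq_ConsD[OF 1(2)] by metis
  obtain R ws where tb: "vs = R @ x # ws" "\<forall>y\<in>set R. \<not> P y" "filter P ws = v @ (b # z)"
    using filter_eq_ConsD[OF 2(2)] by metis
  obtain V V' where 3: "ws = V @ V'" "filter P V = v" "filter P V' = b # z"
    using filter_eq_appendD[OF tb(3)] by auto
  obtain us' Z where 4: "V' = us' @ b # Z" "\<forall>u\<in>set us'. \<not> P u"
    using filter_eq_ConsD[OF 3(3)] by auto
  have "set V \<subseteq> set v \<union> {y. \<not> P y}" using 3(2) by auto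
  then show ?thesis using 1 2 tb 3 4
    by (intro exI[of _ "W1 @ us"] exI[of _ R] exI[of _ "V @ us'"] exI[of _ Z]) auto
qed



context
  fixes Sig :: "'a set" and w :: "'a list" and r :: 'a and \<beta> :: "'a option"
  assumes fin: "finite Sig" and wS: "w \<in> lists Sig" and rS: "r \<in> Sig"
    and bne: "\<beta> \<noteq> Some r"
    and child: "\<And>c. c \<in> vertices Sig \<Longrightarrow> c \<noteq> Some r \<Longrightarrow> bigram_e w (Some r) c > 0 \<Longrightarrow> c = \<beta>"
    and par: "\<And>p. p \<in> vertices Sig \<Longrightarrow> p \<noteq> Some r \<Longrightarrow> bigram_e w p (Some r) > 0 \<Longrightarrow> bigram_e w p \<beta> = 0"
    and loop: "bigram_e w (Some r) (Some r) > 0 \<Longrightarrow> outflow Sig w (Some r) = 1"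
begin

lemma inS: "w = s @ c # t \<Longrightarrow> c \<in> Sig" using wS by auto

lemma vS: "c \<in> Sig \<Longrightarrow> Some c \<in> vertices Sig" by (simp add: vertices_def)

lemma F1: assumes "w = s @ [r, c] @ t" "c \<noteq> r" shows "\<beta> = Some c"
proof -
  have "c \<in> Sig" using inS[of "s @ [r]" c t] assms(1) by simp
  then show ?thesis using child[of "Some c"] adj[OF assms(1)] vS assms(2) by auto
qed

lemma F1r: assumes "w = s @ r # t1 @ c # t2" "\<forall>y\<in>set t1. y = r" "c \<noteq> r" shows "\<beta> = Some c"
proof -
  have "s @ r # t1 @ c # t2 = s @ (r # t1) @ c # t2" by simp
  also have "\<dots> = (s @ t1) @ [r, c] @ t2" using rep_comm[OF assms(2)] by simp
  finally have "w = (s @ t1) @ [r, c] @ t2" using assms(1) by simp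
  then show ?thesis using F1 assms(3) by blast
qed

lemma Fend: assumes "w = s @ r # t" "\<forall>y\<in>set t. y = r" shows "\<beta> = None"
proof -
  have "w = (s @ t) @ [r]" using assms(1) rep_comm[OF assms(2)] by simp
  from adj_end[OF this] show ?thesis using child[of None] by (simp add: vertices_def)
qed

lemma Fsplit: assumes "w = s @ r # t" "y \<in> set t" "y \<noteq> r"
  shows "\<exists>t1 c t2. t = t1 @ c # t2 \<and> c \<noteq> r \<and> (\<forall>y\<in>set t1. y = r) \<and> \<beta> = Some c"
proof -
  obtain t1 c t2 where t: "t = t1 @ c # t2" "c \<noteq> r" "\<forall>y\<in>set t1. \<not> y \<noteq> r"
    using split_list_first_prop[of t "\<lambda>y. y \<noteq> r"] assms(2,3) by blast
  have t3: "\<forall>y\<in>set t1. y = r" using t(3) by blast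
  have "\<beta> = Some c" by (rule F1r[OF _ t3 t(2)]) (use assms(1) t(1) in simp)
  then show ?thesis using t(1,2) t3 by blast
qed

lemma F2: assumes "w = s @ [p, r] @ t" "p \<noteq> r" "w = s' @ [p, c] @ t'" "\<beta> = Some c" shows False
proof -
  have "p \<in> Sig" using inS[of s p "r # t"] assms(1) by simp
  then show ?thesis using par[of "Some p"] adj[OF assms(1)] adj[OF assms(3)] vS assms(2,4) by auto
qed

lemma fwd: assumes "Iw w x a b" "Jw w x a b" "a \<noteq> x" "b \<noteq> x"
  shows "\<exists>x a b. a \<noteq> x \<and> b \<noteq> x \<and> Iw (filter (\<lambda>c. c \<noteq> r) w) x a b \<and> Jw (filter (\<lambda>c. c \<noteq> r) w) x a b"
proof -
  let ?F = "filter (\<lambda>c. c \<noteq> r)"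
  obtain U0 v0 Z0 where I0: "w = U0 @ [a,x] @ v0 @ [b] @ Z0" "a \<notin> set v0" using assms(1) unfolding Iw_def by blast
  obtain U1 v1 Z1 where J0: "w = U1 @ [a] @ v1 @ [b] @ Z1" "x \<notin> set v1" using assms(2) unfolding Jw_def by blast
  obtain U2 v2 Z2 where J: "w = U2 @ [a] @ v2 @ [b] @ Z2" "set v2 \<subseteq> set v1" "a \<notin> set v2" "b \<notin> set v2"
    using NJ[OF J0(1)] by blast
  have xv2: "x \<notin> set v2" using J(2) J0(2) by blast
  consider (A) "x \<noteq> r" "a \<noteq> r" "b \<noteq> r" | (B) "a = r" | (C) "x = r" | (D) "b = r" "a \<noteq> r" "x \<noteq> r" by blast
  then show ?thesis
  proof cases
    case A
    have "Iw (?F w) x a b" unfolding Iw_def using I0 A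
      by (intro exI[of _ "?F U0"] exI[of _ "?F v0"] exI[of _ "?F Z0"]) auto
    moreover have "Jw (?F w) x a b" unfolding Jw_def using J0 A
      by (intro exI[of _ "?F U1"] exI[of _ "?F v1"] exI[of _ "?F Z1"]) auto
    ultimately show ?thesis using assms(3,4) by blast
  next
    case B
    have bx: "\<beta> = Some x" using F1[of U0 x "v0 @ [b] @ Z0"] I0(1) B assms(3) by simp
    show ?thesis
    proof (cases v2)
      case (Cons c v2t)
      have "c \<noteq> r" using J(3) B Cons by auto
      moreover have "w = U2 @ [r, c] @ (v2t @ [b] @ Z2)" using J(1) B Cons by simp
      ultimately have "\<beta> = Some c" using F1 by blast
      then show ?thesis using bx xv2 Cons by simp
    next
      case Nil
      have wrb: "w = U2 @ [r,b] @ Z2" using J(1) Nil B by simp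
      show ?thesis
      proof (cases "b = r")
        case False then have "\<beta> = Some b" using F1[OF wrb] by simp
        then show ?thesis using bx assms(4) by simp
      next
        case True
        have out: "outflow Sig w (Some r) = 1" using loop adj[OF wrb[unfolded True]] by simp
        have I1: "w = (U0 @ [r,x] @ v0) @ r # Z0" using I0(1) B True by simp
        show ?thesis
        proof (cases "\<exists>y\<in>set Z0. y \<noteq> r")
          case False then have "\<beta> = None" using Fend[OF I1] by auto
          then show ?thesis using bx by simp
        next
          case True
          then obtain y where "y \<in> set Z0" "y \<noteq> r" by blast
          then obtain t1 c t2 where t: "Z0 = t1 @ c # t2" "c \<noteq> r" "\<forall>y\<in>set t1. y = r" "\<beta> = Some c"
            using Fsplit[OF I1] by blast
          with bx have cx: "c = x" by simp
          have "r # t1 @ c # t2 = (r # t1) @ c # t2" by simp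
          also have "\<dots> = t1 @ [r, c] @ t2" using rep_comm[OF t(3)] by simp
          finally have w2: "w = (U0 @ [r,x] @ v0 @ t1) @ [r,x] @ t2" using I1 t(1) cx by simp
          have w1: "w = U0 @ [r,x] @ (v0 @ [b] @ Z0)" using I0(1) B by simp
          have "bigram_e w (Some r) (Some x) \<ge> 2" using adj2[OF w1 w2] by simp
          moreover have "bigram_e w (Some r) (Some x) \<le> outflow Sig w (Some r)"
          proof -
            have "x \<in> Sig" using inS[of "U0 @ [r]" x "v0 @ [b] @ Z0"] w1 by simp
            then have "Some x \<in> vertices Sig - {Some r}" using assms(3) B by (simp add: vertices_def)
            moreover have "finite (vertices Sig - {Some r})" using fin by (simp add: vertices_def)
            ultimately show ?thesis unfolding outflow_def by (intro member_le_sum) auto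
          qed
          ultimately show ?thesis using out by simp
        qed
      qed
    qed
  next
    case C
    have ar: "a \<noteq> r" "b \<noteq> r" using C assms(3,4) by auto
    obtain v Z where I: "w = U0 @ [a,r] @ v @ [b] @ Z" "set v \<subseteq> set v0" "b \<notin> set v"
      using NI[OF I0(1)[unfolded C]] by blast
    have av: "a \<notin> set v" using I(2) I0(2) by blast
    have I1: "w = (U0 @ [a]) @ r # (v @ b # Z)" using I(1) by simp
    have "b \<in> set (v @ b # Z)" by simp
    from Fsplit[OF I1 this ar(2)]
    obtain t1 c t2 where t: "v @ b # Z = t1 @ c # t2" "c \<noteq> r" "\<forall>y\<in>set t1. y = r" "\<beta> = Some c"
      by blast
    have nadj: "\<And>s' t'. w = s' @ [a, c] @ t' \<Longrightarrow> False"
      using F2[of U0 a "v @ [b] @ Z"] I(1) ar(1) t(4) by blast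
    have Ft1: "?F t1 = []" using t(3) by (intro filter_False) simp
    have Ft: "?F (v @ b # Z) = c # ?F t2" using t(1,2) Ft1 by simp
    have FwA: "?F w = ?F U0 @ [a] @ ?F (v @ b # Z)" using I(1) ar by simp
    have Fw: "?F w = ?F U0 @ [a] @ c # ?F t2" using FwA by (simp only: Ft)
    have rv2: "r \<notin> set v2" using xv2 C by simp
    have Fv2: "?F v2 = v2" using rv2 by (subst filter_id_conv) blast
    have FJ: "?F w = ?F U2 @ [a] @ v2 @ [b] @ ?F Z2" using J(1) Fv2 ar by simp
    show ?thesis
    proof (cases "c = b")
      case True
      obtain d v2t where v2: "v2 = d # v2t"
      proof (cases v2)
        case Nil then show ?thesis using nadj[of U2 Z2] J(1) True by simp
      next
        case (Cons d v2t) then show ?thesis using that by blast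
      qed
      have "Iw (?F w) d a b" unfolding Iw_def using FJ v2 J(3)
        by (intro exI[of _ "?F U2"] exI[of _ v2t] exI[of _ "?F Z2"]) auto
      moreover have "Jw (?F w) d a b" unfolding Jw_def using Fw True
        by (intro exI[of _ "?F U0"] exI[of _ "[]"] exI[of _ "?F t2"]) auto
      moreover have "a \<noteq> d" "b \<noteq> d" using J(3,4) v2 by auto
      ultimately show ?thesis by blast
    next
      case False
      have Ft2: "?F v @ b # ?F Z = c # ?F t2" using Ft ar by simp
      obtain v'' where v'': "?F v = c # v''" "?F t2 = v'' @ b # ?F Z"
      proof (cases "?F v")
        case Nil
        then have "b = c" using Ft2 by simp
        then show ?thesis using False by simp
      next
        case (Cons d v'')
        then have "d = c" "?F t2 = v'' @ b # ?F Z" using Ft2 by simp_all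
        then show ?thesis using that Cons by blast
      qed
      have "set (?F v) \<subseteq> set v" by auto
      then have cv: "c \<in> set v" and sv'': "set v'' \<subseteq> set v" using v''(1) by auto
      have av'': "a \<notin> set v''" using sv'' av by blast
      have Fw2: "?F w = ?F U0 @ [a, c] @ v'' @ [b] @ ?F Z" using Fw v''(2) by simp
      have ac: "a \<noteq> c" using cv av by blast
      show ?thesis
      proof (cases "c \<in> set v2")
        case True
        then obtain d v2t where v2: "v2 = d # v2t" by (cases v2) auto
        have dc: "d \<noteq> c" using nadj[of U2 "v2t @ [b] @ Z2"] J(1) v2 by auto
        then have "c \<in> set v2t" using True v2 by simp
        then obtain p q where pq: "v2t = p @ c # q" by (metis split_list)
        have "Iw (?F w) d a c" unfolding Iw_def using FJ v2 pq J(3)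
          by (intro exI[of _ "?F U2"] exI[of _ p] exI[of _ "q @ [b] @ ?F Z2"]) auto
        moreover have "Jw (?F w) d a c" unfolding Jw_def using Fw2
          by (intro exI[of _ "?F U0"] exI[of _ "[]"] exI[of _ "v'' @ [b] @ ?F Z"]) auto
        moreover have "a \<noteq> d" using J(3) v2 by auto
        ultimately show ?thesis using dc by (intro exI[of _ d] exI[of _ a] exI[of _ c]) blast
      next
        case False
        have "Iw (?F w) c a b" unfolding Iw_def using Fw2 av''
          by (intro exI[of _ "?F U0"] exI[of _ v''] exI[of _ "?F Z"]) auto
        moreover have "Jw (?F w) c a b" unfolding Jw_def using FJ False
          by (intro exI[of _ "?F U2"] exI[of _ v2] exI[of _ "?F Z2"]) auto
        ultimately show ?thesis using ac \<open>c \<noteq> b\<close> by (intro exI[of _ c] exI[of _ a] exI[of _ b]) blast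
      qed
    qed
  next
    case D
    obtain v Z where I: "w = U0 @ [a,x] @ v @ [r] @ Z" "set v \<subseteq> set v0" "r \<notin> set v"
      using NI[OF I0(1)[unfolded D(1)]] by blast
    have av: "a \<notin> set v" using I(2) I0(2) by blast
    have J1: "w = U2 @ [a] @ v2 @ [r] @ Z2" "r \<notin> set v2" using J D by auto
    have I1: "w = (U0 @ [a,x] @ v) @ r # Z" using I(1) by simp
    have J2: "w = (U2 @ [a] @ v2) @ r # Z2" using J1(1) by simp
    show ?thesis
    proof (cases "\<beta> = None")
      case True
      have Zr: "\<forall>y\<in>set Z. y = r"
      proof (rule ccontr)
        assume "\<not> (\<forall>y\<in>set Z. y = r)"
        then obtain y where "y \<in> set Z" "y \<noteq> r" by blast
        then show False using Fsplit[OF I1] True by blast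
      qed
      have Z2r: "\<forall>y\<in>set Z2. y = r"
      proof (rule ccontr)
        assume "\<not> (\<forall>y\<in>set Z2. y = r)"
        then obtain y where "y \<in> set Z2" "y \<noteq> r" by blast
        then show False using Fsplit[OF J2] True by blast
      qed
      have l1: "last (U0 @ [a,x] @ v) \<in> insert x (set v)" by (cases v rule: rev_cases) auto
      have l2: "last (U2 @ [a] @ v2) \<in> insert a (set v2)" by (cases v2 rule: rev_cases) auto
      have "U0 @ [a,x] @ v = U2 @ [a] @ v2"
      proof (rule strip_r[OF _ Zr Z2r])
        show "(U0 @ [a,x] @ v) @ r # Z = (U2 @ [a] @ v2) @ r # Z2" using I1 J2 by simp
        show "last (U0 @ [a,x] @ v) \<noteq> r" using l1 I(3) D by auto
        show "last (U2 @ [a] @ v2) \<noteq> r" using l2 J1(2) D by auto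
      qed simp_all
      then have "U0 @ a # (x # v) = U2 @ a # v2" by simp
      then have "x # v = v2" by (rule last_a_eq) (use assms(3) av J(3) in auto)
      then show ?thesis using xv2 by auto
    next
      case False
      obtain y1 where y1: "y1 \<in> set Z" "y1 \<noteq> r"
      proof (rule ccontr)
        assume "\<not> thesis"
        then have "\<forall>y\<in>set Z. y = r" using that by blast
        then show False using Fend[OF I1] False by simp
      qed
      obtain t1 c t2 where t: "Z = t1 @ c # t2" "c \<noteq> r" "\<forall>y\<in>set t1. y = r" "\<beta> = Some c"
        using Fsplit[OF I1 y1] by blast
      obtain y2 where y2: "y2 \<in> set Z2" "y2 \<noteq> r"
      proof (rule ccontr)
        assume "\<not> thesis"
        then have "\<forall>y\<in>set Z2. y = r" using that by blast
        then show False using Fend[OF J2] False by simp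
      qed
      obtain s1 c' s2 where s: "Z2 = s1 @ c' # s2" "c' \<noteq> r" "\<forall>y\<in>set s1. y = r" "\<beta> = Some c'"
        using Fsplit[OF J2 y2] by blast
      have cc: "c' = c" using s(4) t(4) by simp
      have Fv: "?F v = v" using I(3) by (subst filter_id_conv) blast
      have Fv2: "?F v2 = v2" using J1(2) by (subst filter_id_conv) blast
      have Ft1: "?F t1 = []" using t(3) by (intro filter_False) simp
      have Fs1: "?F s1 = []" using s(3) by (intro filter_False) simp
      have FI: "?F w = ?F U0 @ [a,x] @ v @ [c] @ ?F t2" using I(1) t(1,2) Fv Ft1 D by simp
      have FJ: "?F w = ?F U2 @ [a] @ v2 @ [c] @ ?F s2" using J1(1) s(1,2) Fv2 Fs1 D cc by simp
      show ?thesis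
      proof (cases "c = x")
        case False
        have "Iw (?F w) x a c" unfolding Iw_def using FI av
          by (intro exI[of _ "?F U0"] exI[of _ v] exI[of _ "?F t2"]) auto
        moreover have "Jw (?F w) x a c" unfolding Jw_def using FJ xv2
          by (intro exI[of _ "?F U2"] exI[of _ v2] exI[of _ "?F s2"]) auto
        ultimately show ?thesis using assms(3) False by blast
      next
        case True
        obtain d v2t where v2: "v2 = d # v2t"
        proof (cases v2)
          case Nil
          have "w = U2 @ [a, r] @ Z2" using J1(1) Nil by simp
          then show ?thesis using F2[of U2 a Z2 U0 x "v @ [r] @ Z"] I(1) D t(4) True by simp
        next
          case (Cons d v2t) then show ?thesis using that by blast
        qed
        have "Iw (?F w) d a x" unfolding Iw_def using FJ v2 J(3) True
          by (intro exI[of _ "?F U2"] exI[of _ v2t] exI[of _ "?F s2"]) auto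
        moreover have "Jw (?F w) d a x" unfolding Jw_def using FI
          by (intro exI[of _ "?F U0"] exI[of _ "[]"] exI[of _ "v @ [c] @ ?F t2"]) auto
        moreover have "a \<noteq> d" "x \<noteq> d" using J(3) xv2 v2 by auto
        ultimately show ?thesis by blast
      qed
    qed
  qed
qed

lemma bwd: assumes "Iw (filter (\<lambda>c. c \<noteq> r) w) x a b" "Jw (filter (\<lambda>c. c \<noteq> r) w) x a b" "a \<noteq> x" "b \<noteq> x"
  shows "\<exists>x a b. a \<noteq> x \<and> b \<noteq> x \<and> Iw w x a b \<and> Jw w x a b"
proof -
  let ?F = "filter (\<lambda>c. c \<noteq> r)"
  obtain u v z where I0: "?F w = u @ [a,x] @ v @ [b] @ z" "a \<notin> set v" using assms(1) unfolding Iw_def by blast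
  obtain u2 v2 z2 where J0: "?F w = u2 @ [a] @ v2 @ [b] @ z2" "x \<notin> set v2" using assms(2) unfolding Jw_def by blast
  have "a \<in> set (?F w)" "x \<in> set (?F w)" "b \<in> set (?F w)" using I0(1) by auto
  then have nr: "a \<noteq> r" "x \<noteq> r" "b \<noteq> r" by auto
  obtain U R V Z where LI: "w = U @ [a] @ R @ [x] @ V @ [b] @ Z" "\<forall>y\<in>set R. y = r" "set V \<subseteq> set v \<union> {r}"
    using LiftI[OF I0(1)] by auto
  obtain U2 V2 Z2 where LJ: "w = U2 @ [a] @ V2 @ [b] @ Z2" "set V2 \<subseteq> set v2 \<union> {r}"
    using LiftJ[OF J0(1)] by auto
  have aV: "a \<notin> set V" using LI(3) I0(2) nr by blast
  have xV2: "x \<notin> set V2" using LJ(2) J0(2) nr by blast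
  show ?thesis
  proof (cases R)
    case Nil
    have "Iw w x a b" unfolding Iw_def using LI(1) aV Nil
      by (intro exI[of _ U] exI[of _ V] exI[of _ Z]) auto
    moreover have "Jw w x a b" unfolding Jw_def using LJ(1) xV2 by blast
    ultimately show ?thesis using assms(3,4) by blast
  next
    case (Cons r0 R')
    have r0: "r0 = r" "\<forall>y\<in>set R'. y = r" using LI(2) Cons by auto
    have wR: "w = (U @ [a]) @ r # R' @ x # (V @ [b] @ Z)" using LI(1) Cons r0(1) by simp
    have "\<beta> = Some x" using F1r[OF wR r0(2)] nr by simp
    have "a \<notin> set R'" using r0(2) nr(1) by blast
    then have "a \<notin> set (R' @ [x] @ V)" using aV assms(3) by simp
    moreover have "w = U @ [a, r] @ (R' @ [x] @ V) @ [b] @ Z" using LI(1) Cons r0(1) by simp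
    ultimately have "Iw w r a b" unfolding Iw_def by blast
    moreover have "r \<notin> set V2"
    proof
      assume "r \<in> set V2"
      then obtain p q where pq: "V2 = p @ r # q" by (metis split_list)
      obtain t1 c t2 where t: "q @ [b] = t1 @ c # t2" "c \<noteq> r" "\<forall>y\<in>set t1. \<not> y \<noteq> r"
        using split_list_first_prop[of "q @ [b]" "\<lambda>y. y \<noteq> r"] nr by auto
      have "q @ b # Z2 = t1 @ c # (t2 @ Z2)" using arg_cong[OF t(1), of "\<lambda>l. l @ Z2"] by simp
      then have "w = (U2 @ [a] @ p) @ r # t1 @ c # (t2 @ Z2)" using LJ(1) pq by simp
      moreover have "\<forall>y\<in>set t1. y = r" using t(3) by blast
      ultimately have "\<beta> = Some c" using F1r t(2) by blast
      with \<open>\<beta> = Some x\<close> have "c = x" by simp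
      moreover have "c \<in> set (q @ [b])" using t(1) by simp
      then have "c \<in> set q \<or> c = b" by auto
      ultimately show False using xV2 pq assms(4) by auto
    qed
    then have "Jw w r a b" unfolding Jw_def using LJ(1) by blast
    ultimately show ?thesis using nr by blast
  qed
qed

end

theorem lemma2:
  fixes Sig :: "'a set" and w :: "'a list" and r :: 'a
  assumes "finite Sig"
    and "w \<in> lists Sig"
    and "r \<in> Sig"
    and "removable Sig w r"
  shows "w \<in> L_OBST Sig \<longleftrightarrow> proj_del r w \<in> L_OBST Sig"
proof -
  have "\<exists>b\<in>vertices Sig. b \<noteq> Some r \<and> bigram_e w (Some r) b > 0 \<and>
        (\<forall>c\<in>vertices Sig. c \<noteq> Some r \<and> bigram_e w (Some r) c > 0 \<longrightarrow> c = b) \<and>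
        (\<forall>p\<in>vertices Sig. p \<noteq> Some r \<and> bigram_e w p (Some r) > 0 \<longrightarrow> bigram_e w p b = 0)"
    and lp: "bigram_e w (Some r) (Some r) > 0 \<longrightarrow> outflow Sig w (Some r) = 1"
    using assms(4) unfolding removable_def by simp_all
  then obtain \<beta> where b: "\<beta> \<noteq> Some r"
    "\<forall>c\<in>vertices Sig. c \<noteq> Some r \<and> bigram_e w (Some r) c > 0 \<longrightarrow> c = \<beta>"
    "\<forall>p\<in>vertices Sig. p \<noteq> Some r \<and> bigram_e w p (Some r) > 0 \<longrightarrow> bigram_e w p \<beta> = 0"
    by blast
  have ch: "\<And>c. c \<in> vertices Sig \<Longrightarrow> c \<noteq> Some r \<Longrightarrow> bigram_e w (Some r) c > 0 \<Longrightarrow> c = \<beta>"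
    using b(2) by blast
  have pa: "\<And>p. p \<in> vertices Sig \<Longrightarrow> p \<noteq> Some r \<Longrightarrow> bigram_e w p (Some r) > 0 \<Longrightarrow> bigram_e w p \<beta> = 0"
    using b(3) by blast
  have lp': "bigram_e w (Some r) (Some r) > 0 \<Longrightarrow> outflow Sig w (Some r) = 1" using lp by blast
  note f = fwd[OF assms(1,2,3) b(1) ch pa lp']
  note g = bwd[OF assms(1,2,3) b(1) ch pa lp']
  have F: "filter (\<lambda>c. c \<noteq> r) w \<in> lists Sig" using assms(2) by auto
  have e1: "w \<in> L_OBST Sig \<longleftrightarrow> (\<exists>x a b. a \<noteq> x \<and> b \<noteq> x \<and> Iw w x a b \<and> Jw w x a b)"
    by (rule Lchar[OF assms(2)])
  have e2: "proj_del r w \<in> L_OBST Sig \<longleftrightarrow> (\<exists>x a b. a \<noteq> x \<and> b \<noteq> x \<and>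
      Iw (filter (\<lambda>c. c \<noteq> r) w) x a b \<and> Jw (filter (\<lambda>c. c \<noteq> r) w) x a b)"
    unfolding proj_del_def by (rule Lchar[OF F])
  show ?thesis unfolding e1 e2
  proof
    assume "\<exists>x a b. a \<noteq> x \<and> b \<noteq> x \<and> Iw w x a b \<and> Jw w x a b"
    then obtain x a b where "a \<noteq> x" "b \<noteq> x" "Iw w x a b" "Jw w x a b" by blast
    then show "\<exists>x a b. a \<noteq> x \<and> b \<noteq> x \<and>
      Iw (filter (\<lambda>c. c \<noteq> r) w) x a b \<and> Jw (filter (\<lambda>c. c \<noteq> r) w) x a b"
      using f by blast
  next
    assume "\<exists>x a b. a \<noteq> x \<and> b \<noteq> x \<and>
      Iw (filter (\<lambda>c. c \<noteq> r) w) x a b \<and> Jw (filter (\<lambda>c. c \<noteq> r) w) x a b"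
    then obtain x a b where "a \<noteq> x" "b \<noteq> x" "Iw (filter (\<lambda>c. c \<noteq> r) w) x a b"
      "Jw (filter (\<lambda>c. c \<noteq> r) w) x a b" by blast
    then show "\<exists>x a b. a \<noteq> x \<and> b \<noteq> x \<and> Iw w x a b \<and> Jw w x a b"
      using g by blast
  qed
qed

end
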